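(* The scalar curvature $\mathrm{Sc}(C\Gamma)$ of the generalized Cartan canonical connection $C\Gamma(N)$ of the space $\mathcal{ED}MH_m^n$, computed with respect to the adapted metric $\mathbb{G}=h^*_{ab}dt^a\otimes dt^b+\varphi_{ij}dx^i\otimes dx^j+h^*_{ab}\varphi^{ij}\delta p_i^a\otimes\delta p_j^b$, has the expression $$\mathrm{Sc}(C\Gamma)=(4mc)\cdot\chi+\mathfrak{R},$$ where $\chi=h^{ab}\chi_{ab}$ and $\mathfrak{R}=\varphi^{ij}\mathfrak{R}_{ij}$ are the classical scalar curvatures of the metrics $h_{ab}(t)$ and $\varphi_{ij}(x)$.
   Context: Let $(\mathcal{T}^m,h_{ab}(t))$ be a Riemannian manifold with coordinates $(t^a)$ and $M^n$ a manifold with coordinates $(x^i)$ carrying a semi-Riemannian metric $\varphi_{ij}(x)$; let $m\neq0$ (mass), $e$ (charge), $c$ (speed of light), $A^{(a)}_{(i)}(t,x)$ a d-tensor and $\mathcal{P}(t,x)$ a smooth function. On the dual 1-jet space $E^*=J^{1*}(\mathcal{T},M)$ with coordinates $(t^a,x^i,p^a_i)$ consider the Hamiltonian $H=\frac{1}{4mc}h_{ab}\varphi^{ij}p^a_ip^b_j-\frac{e}{m^2c}h_{ab}\varphi^{ij}A^{(b)}_{(j)}p^a_i+\frac{e^2}{m^3c}h_{ab}\varphi^{ij}A^{(a)}_{(i)}A^{(b)}_{(j)}-\mathcal{P}$; the pair $(E^*,H)$ is the space $\mathcal{ED}MH_m^n$. Its fundamental vertical metrical d-tensor is $\frac12\partial^2H/\partial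 p^a_i\partial p^b_j=h^*_{ab}\varphi^{ij}$ with $h^*_{ab}=(4mc)^{-1}h_{ab}$. Let $\chi^a_{bc}$, $\gamma^k_{ij}$ be the Christoffel symbols of $h_{ab}$, $\varphi_{ij}$. The canonical nonlinear connection is $N^{(a)}_{1\,(i)b}=\chi^a_{bf}p^f_i$, $N^{(a)}_{2\,(i)j}=\gamma^r_{ij}[\frac{2e}{m}A^{(a)}_{(r)}-p^a_r]-\frac{e}{m}[\partial A^{(a)}_{(i)}/\partial x^j+\partial A^{(a)}_{(j)}/\partial x^i]$, with adapted cobasis $\{dt^a,dx^i,\delta p^a_i=dp^a_i+N^{(a)}_{1\,(i)f}dt^f+N^{(a)}_{2\,(i)r}dx^r\}$. The generalized Cartan canonical connection is $C\Gamma(N)=(\chi^a_{bc},0,\gamma^i_{jk},0)$, whose Ricci tensor has exactly two effective local Ricci d-tensors $\chi_{ab}=\chi^f_{abf}$ and $\mathfrak{R}_{ij}=\mathfrak{R}^r_{ijr}$, the classical Ricci tensors of $h_{ab}$ and $\varphi_{ij}$ (with $\chi^d_{abc}$, $\mathfrak{R}^l_{ijk}$ their curvature tensors). *)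

theory Defs
  imports "HOL-Analysis.Analysis"
begin

text \<open>Local coordinate (index) calculus. Coordinates on T are indexed by a finite type 'm,
  on M by a finite type 'n; a metric is a matrix-valued function of the coordinates.\<close>

definition pd :: "(real^'k \<Rightarrow> real) \<Rightarrow> 'k \<Rightarrow> real^'k \<Rightarrow> real" where
  "pd f k y = deriv (\<lambda>s. f (y + s *\<^sub>R axis k 1)) 0"

definition christoffel :: "(real^'k \<Rightarrow> real^'k^'k) \<Rightarrow> real^'k \<Rightarrow> 'k \<Rightarrow> 'k \<Rightarrow> 'k \<Rightarrow> real" where
  "christoffel g y k i j =
     (1/2) * (\<Sum>l\<in>UNIV. matrix_inv (g y) $ k $ l *
        (pd (\<lambda>z. g z $ l $ i) j y + pd (\<lambda>z. g z $ l $ j) i y - pd (\<lambda>z. g z $ i $ j) l y))"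

definition curvature :: "(real^'k \<Rightarrow> real^'k^'k) \<Rightarrow> real^'k \<Rightarrow> 'k \<Rightarrow> 'k \<Rightarrow> 'k \<Rightarrow> 'k \<Rightarrow> real" where
  "curvature g y l i j k =
     pd (\<lambda>z. christoffel g z l i j) k y - pd (\<lambda>z. christoffel g z l i k) j y
     + (\<Sum>r\<in>UNIV. christoffel g y r i j * christoffel g y l r k
                  - christoffel g y r i k * christoffel g y l r j)"

definition ricci :: "(real^'k \<Rightarrow> real^'k^'k) \<Rightarrow> real^'k \<Rightarrow> 'k \<Rightarrow> 'k \<Rightarrow> real" where
  "ricci g y i j = (\<Sum>r\<in>UNIV. curvature g y r i j r)"

definition scalar_curv :: "(real^'k \<Rightarrow> real^'k^'k) \<Rightarrow> real^'k \<Rightarrow> real" where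
  "scalar_curv g y = (\<Sum>i\<in>UNIV. \<Sum>j\<in>UNIV. matrix_inv (g y) $ i $ j * ricci g y i j)"

text \<open>Adapted frame index set on E* = J^{1*}(T,M): Inl a ~ dt^a, Inr (Inl i) ~ dx^i,
  Inr (Inr (a,i)) ~ delta p^a_i.\<close>
type_synonym ('m,'n) aidx = "'m + 'n + ('m \<times> 'n)"

text \<open>The adapted metric G = h*_{ab} dt^a dt^b + phi_{ij} dx^i dx^j + h*_{ab} phi^{ij} dp^a_i dp^b_j,
  with h*_{ab} = h_{ab}/(4mc), at the point with coordinates (t,x).\<close>
definition adapted_metric ::
  "real \<Rightarrow> real \<Rightarrow> (real^'m \<Rightarrow> real^'m^'m) \<Rightarrow> (real^'n \<Rightarrow> real^'n^'n) \<Rightarrow> real^'m \<Rightarrow> real^'n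
     \<Rightarrow> real^(('m::finite,'n::finite) aidx)^(('m,'n) aidx)" where
  "adapted_metric mass c h \<phi> t x = (\<chi> A B.
     (case (A, B) of
        (Inl a, Inl b) \<Rightarrow> h t $ a $ b / (4 * mass * c)
      | (Inr (Inl i), Inr (Inl j)) \<Rightarrow> \<phi> x $ i $ j
      | (Inr (Inr (a,i)), Inr (Inr (b,j))) \<Rightarrow> h t $ a $ b / (4 * mass * c) * matrix_inv (\<phi> x) $ i $ j
      | _ \<Rightarrow> 0))"

text \<open>Ricci tensor of the generalized Cartan canonical connection C Gamma(N) in the adapted frame:
  its only effective local Ricci d-tensors are chi_{ab} (Ricci of h) and R_{ij} (Ricci of phi).\<close>
definition cartan_ricci ::
  "(real^'m \<Rightarrow> real^'m^'m) \<Rightarrow> (real^'n \<Rightarrow> real^'n^'n) \<Rightarrow> real^'m \<Rightarrow> real^'n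
     \<Rightarrow> real^(('m::finite,'n::finite) aidx)^(('m,'n) aidx)" where
  "cartan_ricci h \<phi> t x = (\<chi> A B.
     (case (A, B) of
        (Inl a, Inl b) \<Rightarrow> ricci h t a b
      | (Inr (Inl i), Inr (Inl j)) \<Rightarrow> ricci \<phi> x i j
      | _ \<Rightarrow> 0))"

definition cartan_scalar_curv ::
  "real \<Rightarrow> real \<Rightarrow> (real^'m \<Rightarrow> real^'m^'m) \<Rightarrow> (real^'n \<Rightarrow> real^'n^'n) \<Rightarrow> real^'m \<Rightarrow> real^'n
     \<Rightarrow> real" where
  "cartan_scalar_curv mass c h \<phi> t x =
     (\<Sum>A\<in>(UNIV::('m::finite,'n::finite) aidx set). \<Sum>B\<in>UNIV.
        matrix_inv (adapted_metric mass c h \<phi> t x) $ A $ B * cartan_ricci h \<phi> t x $ A $ B)"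

end

theory Submission
  imports Defs
begin

lemma matrix_inv_eqI:
  fixes A B :: "real^'n^'n"
  assumes "A ** B = mat 1"
  shows "matrix_inv A = B"
proof -
  have BA: "B ** A = mat 1" using assms matrix_left_right_inverse by blast
  have ex: "\<exists>A'. A ** A' = mat 1 \<and> A' ** A = mat 1" using assms BA by blast
  have M: "A ** matrix_inv A = mat 1 \<and> matrix_inv A ** A = mat 1"
    unfolding matrix_inv_def by (rule someI_ex[OF ex])
  have "matrix_inv A = matrix_inv A ** (A ** B)" by (simp add: assms)
  also have "\<dots> = (matrix_inv A ** A) ** B" by (simp add: matrix_mul_assoc)
  also have "\<dots> = B" using M by simp
  finally show ?thesis .
qed

lemma inv_props:
  fixes A :: "real^'n^'n"
  assumes "invertible A"
  shows "A ** matrix_inv A = mat 1" "matrix_inv A ** A = mat 1"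
proof -
  have ex: "\<exists>A'. A ** A' = mat 1 \<and> A' ** A = mat 1" using assms invertible_def by blast
  have M: "A ** matrix_inv A = mat 1 \<and> matrix_inv A ** A = mat 1"
    unfolding matrix_inv_def by (rule someI_ex[OF ex])
  then show "A ** matrix_inv A = mat 1" "matrix_inv A ** A = mat 1" by auto
qed

lemma sum_aidx:
  fixes f :: "('m::finite,'n::finite) aidx \<Rightarrow> real"
  shows "(\<Sum>C\<in>UNIV. f C) = (\<Sum>a\<in>UNIV. f (Inl a)) + (\<Sum>i\<in>UNIV. f (Inr (Inl i)))
     + (\<Sum>a\<in>UNIV. \<Sum>i\<in>UNIV. f (Inr (Inr (a,i))))"
proof -
  have "(\<Sum>C\<in>UNIV. f C) = (\<Sum>C\<in>UNIV <+> UNIV. f C)" by simp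
  also have "\<dots> = (\<Sum>a\<in>UNIV. f (Inl a)) + (\<Sum>D\<in>UNIV <+> UNIV. f (Inr D))"
    by (subst sum.Plus) (auto simp: o_def)
  also have "(\<Sum>D\<in>UNIV <+> UNIV. f (Inr D)) = (\<Sum>i\<in>UNIV. f (Inr (Inl i))) + (\<Sum>p\<in>UNIV. f (Inr (Inr p)))"
    by (subst sum.Plus) (auto simp: o_def)
  also have "(\<Sum>p\<in>(UNIV::('m\<times>'n) set). f (Inr (Inr p))) = (\<Sum>a\<in>UNIV. \<Sum>i\<in>UNIV. f (Inr (Inr (a,i))))"
    by (simp add: sum.cartesian_product UNIV_Times_UNIV[symmetric] del: UNIV_Times_UNIV)
  finally show ?thesis by simp
qed


lemma aidx_cases:
  fixes A :: "('m,'n) aidx"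
  obtains a where "A = Inl a" | i where "A = Inr (Inl i)" | a i where "A = Inr (Inr (a,i))"
  by (metis sumE surj_pair)

theorem mainTheorem1:
  fixes mass c :: real
    and h :: "real^'m::finite \<Rightarrow> real^'m^'m"
    and \<phi> :: "real^'n::finite \<Rightarrow> real^'n^'n"
    and t :: "real^'m" and x :: "real^'n"
  assumes "mass \<noteq> 0" and "c > 0"
    and "\<And>s. transpose (h s) = h s"
    and "\<And>s v. v \<noteq> 0 \<Longrightarrow> v \<bullet> (h s *v v) > 0"
    and "\<And>y. transpose (\<phi> y) = \<phi> y"
    and "\<And>y. invertible (\<phi> y)"
  shows "cartan_scalar_curv mass c h \<phi> t x = (4 * mass * c) * scalar_curv h t + scalar_curv \<phi> x"
proof -
  define s where "s = 4 * mass * c"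
  have s0: "s \<noteq> 0" using assms(1,2) by (simp add: s_def)
  define H where "H = h t"
  define P where "P = \<phi> x"
  define Hi where "Hi = matrix_inv H"
  define Pi where "Pi = matrix_inv P"
  have "\<forall>v. H *v v = 0 \<longrightarrow> v = 0"
  proof (intro allI impI)
    fix v assume "H *v v = 0"
    show "v = 0"
    proof (rule ccontr)
      assume "v \<noteq> 0"
      then have "v \<bullet> (h t *v v) > 0" by (rule assms(4))
      then show False using \<open>H *v v = 0\<close> by (simp add: H_def)
    qed
  qed
  then have "invertible H" using matrix_left_invertible_ker invertible_left_inverse by blast
  then have HH: "H ** Hi = mat 1" unfolding Hi_def by (rule inv_props)
  have PP: "Pi ** P = mat 1" unfolding Pi_def P_def by (rule inv_props[OF assms(6)])
  have HHe: "(\<Sum>c\<in>UNIV. H$a$c * Hi$c$b) = (if a = b then 1 else 0)" for a b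
    using HH by (simp add: vec_eq_iff matrix_matrix_mult_def mat_def)
  have PPe: "(\<Sum>k\<in>UNIV. Pi$i$k * P$k$j) = (if i = j then 1 else 0)" for i j
    using PP by (simp add: vec_eq_iff matrix_matrix_mult_def mat_def)
  have PPe2: "(\<Sum>k\<in>UNIV. P$i$k * Pi$k$j) = (if i = j then 1 else 0)" for i j
    using PP matrix_left_right_inverse[of Pi P]
    by (simp add: vec_eq_iff matrix_matrix_mult_def mat_def)
  define G' :: "real^(('m,'n) aidx)^(('m,'n) aidx)" where "G' = (\<chi> A B.
     (case (A, B) of
        (Inl a, Inl b) \<Rightarrow> s * Hi $ a $ b
      | (Inr (Inl i), Inr (Inl j)) \<Rightarrow> Pi $ i $ j
      | (Inr (Inr (a,i)), Inr (Inr (b,j))) \<Rightarrow> s * Hi $ a $ b * P $ i $ j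
      | _ \<Rightarrow> 0))"
  define G where "G = adapted_metric mass c h \<phi> t x"
  have Ge: "G = (\<chi> A B.
     (case (A, B) of
        (Inl a, Inl b) \<Rightarrow> H $ a $ b / s
      | (Inr (Inl i), Inr (Inl j)) \<Rightarrow> P $ i $ j
      | (Inr (Inr (a,i)), Inr (Inr (b,j))) \<Rightarrow> H $ a $ b / s * Pi $ i $ j
      | _ \<Rightarrow> 0))"
    unfolding G_def adapted_metric_def H_def P_def Pi_def s_def by simp
  have GG: "G ** G' = mat 1"
  proof (simp only: vec_eq_iff, intro allI)
    fix A B :: "('m,'n) aidx"
    have q: "X / s * (s * Y) = X * Y" for X Y using s0 by simp
    have r: "X / s * Z * (s * Y * W) = (X * Y) * (Z * W)" for X Y Z W using s0 by simp
    have dbl: "(\<Sum>ab\<in>UNIV. \<Sum>ib\<in>UNIV. H$a$ab*(Pi$i$ib*(Hi$ab$aa*P$ib$ia))) = (\<Sum>ab\<in>UNIV. H$a$ab*Hi$ab$aa)*(\<Sum>ib\<in>UNIV. Pi$i$ib*P$ib$ia)" for a aa i ia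
      by (simp add: sum_product algebra_simps)
    show "(G ** G') $ A $ B = mat 1 $ A $ B"
      unfolding matrix_matrix_mult_def
      apply (cases A rule: aidx_cases; cases B rule: aidx_cases)
      apply (simp_all add: Ge G'_def sum_aidx mat_def q r HHe PPe2 s0 dbl HHe PPe)
      done
  qed
  have inv: "matrix_inv (adapted_metric mass c h \<phi> t x) = G'"
    using matrix_inv_eqI[OF GG] by (simp add: G_def)
  show ?thesis
    unfolding cartan_scalar_curv_def inv
    by (simp add: G'_def cartan_ricci_def sum_aidx scalar_curv_def sum_distrib_left
          Hi_def H_def Pi_def P_def s_def mult.assoc)
qed

end
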